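(* Let $n\ge 2$ and let $q\ne 2$ be a prime power. Let $\xi$ be a generator of the multiplicative group ${\rm GF}(q)^\times$. Then ${\rm GL}(n,q)$ is generated by the two matrices $h_1(\xi)=\mathrm{diag}(\xi,1,\dots,1)$ and $x_{12}(1)\,w$, where $x_{12}(1)=I+E_{12}$ and $w$ is the $n\times n$ matrix with entry $1$ in position $(1,n)$, entry $-1$ in positions $(i+1,i)$ for $1\le i\le n-1$, and $0$ elsewhere. Explicitly, $x_{12}(1)w$ has first row $(-1,0,\dots,0,1)$, second row $(-1,0,\dots,0)$, and for $3\le i\le n$ its $i$-th row has $-1$ in column $i-1$ and zeros elsewhere. (For $n=2$ the generators are $\begin{pmatrix}\xi&0\\0&1\end{pmatrix}$ and $\begin{pmatrix}-1&1\\-1&0\end{pmatrix}$.)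
   Context: $E_{ij}$ denotes the square matrix with $1$ in position $(i,j)$ and $0$ elsewhere. For $\alpha\in{\rm GF}(q)$ and $i\ne j$, $x_{ij}(\alpha)=I+\alpha E_{ij}$; $h_i(\alpha)$ is the diagonal matrix obtained from the identity by replacing the $i$-th diagonal entry by $\alpha$. The matrix $w$ equals $w_1w_2\cdots w_{n-1}$, where $w_i$ is the permutation matrix of the transposition $(i,i+1)$ with its $(i+1,i)$ entry replaced by $-1$. *)

theory Defs
  imports "Jordan_Normal_Form.Matrix"
begin

text \<open>Matrices are n x n matrices of the JNF library; indices are 0-based,
 so paper position (i,j) is entry (i-1,j-1).\<close>

definition E_mat :: "nat \<Rightarrow> nat \<Rightarrow> nat \<Rightarrow> 'a::field mat" where
  "E_mat n i j = mat n n (\<lambda>(r,c). if r = i \<and> c = j then 1 else 0)"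

definition x_mat :: "nat \<Rightarrow> nat \<Rightarrow> nat \<Rightarrow> 'a::field \<Rightarrow> 'a mat" where
  "x_mat n i j \<alpha> = 1\<^sub>m n + \<alpha> \<cdot>\<^sub>m E_mat n i j"

definition h_mat :: "nat \<Rightarrow> nat \<Rightarrow> 'a::field \<Rightarrow> 'a mat" where
  "h_mat n i \<alpha> = mat n n (\<lambda>(r,c). if r = c then (if r = i then \<alpha> else 1) else 0)"

definition w_mat :: "nat \<Rightarrow> 'a::field mat" where
  "w_mat n = mat n n (\<lambda>(r,c). if r = 0 \<and> c = n - 1 then 1
                               else if r = c + 1 then -1 else 0)"

definition GL :: "nat \<Rightarrow> 'a::field mat set" where
  "GL n = {A \<in> carrier_mat n n. invertible_mat A}"

inductive_set gen_group :: "nat \<Rightarrow> 'a::field mat set \<Rightarrow> 'a mat set"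
  for n :: nat and S :: "'a mat set" where
  gen_one: "1\<^sub>m n \<in> gen_group n S"
| gen_mult: "A \<in> S \<Longrightarrow> B \<in> gen_group n S \<Longrightarrow> A * B \<in> gen_group n S"
| gen_inv_mult: "A \<in> S \<Longrightarrow> A' \<in> carrier_mat n n \<Longrightarrow> inverts_mat A A' \<Longrightarrow> inverts_mat A' A
     \<Longrightarrow> B \<in> gen_group n S \<Longrightarrow> A' * B \<in> gen_group n S"

end

theory Submission
  imports Defs "Jordan_Normal_Form.Gauss_Jordan_Elimination"
begin

definition wp :: "nat \<Rightarrow> nat \<Rightarrow> nat" where "wp n r = (if r = 0 then n - 1 else r - 1)"
definition wsg :: "nat \<Rightarrow> nat \<Rightarrow> nat" where "wsg n r = (if Suc r = n then 0 else Suc r)"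
definition ws :: "nat \<Rightarrow> 'a::field" where "ws r = (if r = 0 then 1 else -1)"

lemma wsg_less[simp]: "r < n \<Longrightarrow> wsg n r < n" unfolding wsg_def by auto
lemma wp_less[simp]: "r < n \<Longrightarrow> wp n r < n" unfolding wp_def by auto

lemma w_index: "r < n \<Longrightarrow> k < n \<Longrightarrow> (w_mat n :: 'a::field mat) $$ (r,k) = (if k = wp n r then ws r else 0)"
  unfolding w_mat_def wp_def ws_def by auto

lemma w_carrier[simp]: "w_mat n \<in> carrier_mat n n" "dim_row (w_mat n) = n" "dim_col (w_mat n) = n"
  unfolding w_mat_def by auto

lemma sum_single: "k0 < (n::nat) \<Longrightarrow> (\<Sum>k\<in>{0..<n}. (if k = k0 then a else 0) * f k) = (a * f k0 :: 'a::field)"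
proof -
  assume "k0 < n"
  have "(\<Sum>k\<in>{0..<n}. (if k = k0 then a else 0) * f k) = (\<Sum>k\<in>{0..<n}. if k = k0 then a * f k else 0)"
    by (rule sum.cong) auto
  also have "\<dots> = a * f k0" using \<open>k0 < n\<close> by (subst sum.delta, auto)
  finally show ?thesis .
qed

lemma w_mult: assumes "A \<in> carrier_mat n nc"
  shows "w_mat n * A = mat n nc (\<lambda>(r,c). ws r * A $$ (wp n r, c))"
proof (rule eq_matI)
  fix r c assume rc: "r < dim_row (mat n nc (\<lambda>(r,c). ws r * A $$ (wp n r, c)))" "c < dim_col (mat n nc (\<lambda>(r,c). ws r * (A :: 'a::field mat) $$ (wp n r, c)))"
  hence r: "r < n" and c: "c < nc" by auto
  have wpn: "wp n r < n" using r unfolding wp_def by auto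
  have "(w_mat n * A) $$ (r,c) = (\<Sum>k\<in>{0..<n}. w_mat n $$ (r,k) * A $$ (k,c))"
    using assms r c by (simp add: scalar_prod_def)
  also have "\<dots> = (\<Sum>k\<in>{0..<n}. (if k = wp n r then ws r else 0) * A $$ (k,c))"
    by (rule sum.cong, simp, simp add: w_index r)
  also have "\<dots> = ws r * A $$ (wp n r, c)" by (rule sum_single[OF wpn])
  finally show "(w_mat n * A) $$ (r,c) = mat n nc (\<lambda>(r,c). ws r * A $$ (wp n r, c)) $$ (r,c)"
    using r c by simp
qed (use assms in auto)

lemma wp_wsg: "r < n \<Longrightarrow> k < n \<Longrightarrow> (r = wp n k) = (k = wsg n r)"
  unfolding wp_def wsg_def by auto

lemma wT_index: "r < n \<Longrightarrow> k < n \<Longrightarrow> (transpose_mat (w_mat n) :: 'a::field mat) $$ (r,k) = (if k = wsg n r then ws k else 0)"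
  by (simp add: w_index wp_wsg)

lemma wT_mult: assumes "A \<in> carrier_mat n nc"
  shows "transpose_mat (w_mat n) * A = mat n nc (\<lambda>(r,c). ws (wsg n r) * A $$ (wsg n r, c))"
proof (rule eq_matI)
  fix r c assume rc: "r < dim_row (mat n nc (\<lambda>(r,c). ws (wsg n r) * A $$ (wsg n r, c)))" "c < dim_col (mat n nc (\<lambda>(r,c). ws (wsg n r) * (A :: 'a::field mat) $$ (wsg n r, c)))"
  hence r: "r < n" and c: "c < nc" by auto
  have wpn: "wsg n r < n" using r unfolding wsg_def by auto
  have "(transpose_mat (w_mat n) * A) $$ (r,c) = row (transpose_mat (w_mat n)) r \<bullet> col A c"
    by (subst index_mult_mat) (use assms r c in auto)
  also have "\<dots> = (\<Sum>k\<in>{0..<n}. transpose_mat (w_mat n) $$ (r,k) * A $$ (k,c))"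
    unfolding scalar_prod_def using assms r c by (intro sum.cong) auto
  also have "\<dots> = (\<Sum>k\<in>{0..<n}. (if k = wsg n r then ws (wsg n r) else 0) * A $$ (k,c))"
    by (rule sum.cong, simp, simp add: w_index wp_wsg r)
  also have "\<dots> = ws (wsg n r) * A $$ (wsg n r, c)" by (rule sum_single[OF wpn])
  finally show "(transpose_mat (w_mat n) * A) $$ (r,c) = mat n nc (\<lambda>(r,c). ws (wsg n r) * A $$ (wsg n r, c)) $$ (r,c)"
    using r c by simp
qed (use assms in auto)

lemma wT_carrier[simp]: "transpose_mat (w_mat n) \<in> carrier_mat n n"
  unfolding carrier_mat_def by simp

lemma w_mult'[simp]: "dim_row A = n \<Longrightarrow> w_mat n * A = mat n (dim_col A) (\<lambda>(r,c). ws r * A $$ (wp n r, c))"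
  by (intro w_mult carrier_matI) auto
lemma wT_mult'[simp]: "dim_row A = n \<Longrightarrow> transpose_mat (w_mat n) * A = mat n (dim_col A) (\<lambda>(r,c). ws (wsg n r) * A $$ (wsg n r, c))"
  by (intro wT_mult carrier_matI) auto
lemma addrow_mult[simp]: "dim_row A = n \<Longrightarrow> l < n \<Longrightarrow> addrow_mat n a k l * A = addrow a k l A"
  by (intro addrow_mat[symmetric] carrier_matI) auto
lemma multrow_mult[simp]: "dim_row A = n \<Longrightarrow> multrow_mat n k a * A = multrow k a A"
  by (intro multrow_mat[symmetric] carrier_matI) auto


lemma wp_wsg_id[simp]: "j < n \<Longrightarrow> wp n (wsg n j) = j" unfolding wp_def wsg_def by auto
lemma wsg_wp_id[simp]: "j < n \<Longrightarrow> wsg n (wp n j) = j" unfolding wp_def wsg_def by auto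


abbreviation wT :: "nat \<Rightarrow> 'a::field mat" where "wT n \<equiv> transpose_mat (w_mat n)"

lemma id_BinvB: "n \<ge> 2 \<Longrightarrow> wT n * (addrow_mat n (-1) 0 1 * (addrow_mat n 1 0 1 * w_mat n)) = (1\<^sub>m n :: 'a::field mat)"
  apply (rule eq_matI)
  apply (simp_all add: w_index)
  apply (simp add: wsg_def wp_def ws_def)
  done

lemma id_BBinv: "n \<ge> 2 \<Longrightarrow> addrow_mat n 1 0 1 * (w_mat n * (wT n * addrow_mat n (-1) 0 1)) = (1\<^sub>m n :: 'a::field mat)"
  apply (rule eq_matI)
  apply (simp_all add: w_index)
  apply (simp add: wsg_def wp_def ws_def)
  done

lemma id_T: "n \<ge> 2 \<Longrightarrow> (\<xi>::'a::field) \<noteq> 0 \<Longrightarrow> multrow_mat n 0 \<xi> * (wT n * (addrow_mat n (-1) 0 1 * (multrow_mat n 0 \<xi> * (addrow_mat n 1 0 1 * (w_mat n * 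
   (multrow_mat n 0 (inverse \<xi>) * (wT n * (addrow_mat n (-1) 0 1 * (multrow_mat n 0 (inverse \<xi>) * (addrow_mat n 1 0 1 * w_mat n))))))))))
  = addrow_mat n ((\<xi> - 1)^2 / \<xi>) (n - 1) 0"
  apply (rule eq_matI)
  apply (simp_all add: w_index)
  apply (simp add: wsg_def wp_def ws_def)
  apply (auto simp: field_simps power2_eq_square)
  done

lemma id_hconj: "n \<ge> 2 \<Longrightarrow> (\<beta>::'a::field) \<noteq> 0 \<Longrightarrow> multrow_mat n 0 \<beta> * (addrow_mat n c (n-1) 0 * multrow_mat n 0 (inverse \<beta>)) = addrow_mat n (c / \<beta>) (n-1) 0"
  apply (rule eq_matI)
  apply (auto simp: field_simps)
  done

lemma id_wTw: "n \<ge> 2 \<Longrightarrow> wT n * w_mat n = (1\<^sub>m n :: 'a::field mat)"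
  apply (rule eq_matI)
  apply (simp_all add: w_index)
  apply (simp add: wsg_def wp_def ws_def)
  done

lemma id_conj_add: "Suc (Suc i) < n \<Longrightarrow> w_mat n * (addrow_mat n (\<gamma>::'a::field) i (Suc i) * wT n) = addrow_mat n \<gamma> (Suc i) (Suc (Suc i))"
  apply (rule eq_matI)
  apply (simp_all add: w_index)
  apply (simp add: wsg_def wp_def ws_def)
  apply (auto simp: field_simps)
  done

lemma id_conj_mul: "Suc k < n \<Longrightarrow> w_mat n * (multrow_mat n k (\<alpha>::'a::field) * wT n) = multrow_mat n (Suc k) \<alpha>"
  apply (rule eq_matI)
  apply (simp_all add: w_index)
  apply (simp add: wsg_def wp_def ws_def)
  apply (auto simp: field_simps)
  done

lemma id_comm: "i < n \<Longrightarrow> k < n \<Longrightarrow> j < n \<Longrightarrow> i \<noteq> k \<Longrightarrow> k \<noteq> j \<Longrightarrow> i \<noteq> j \<Longrightarrow>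
  addrow_mat n a i k * (addrow_mat n b k j * (addrow_mat n (-a) i k * addrow_mat n (-b) k j)) = addrow_mat n (a * b :: 'a::field) i j"
  apply (rule eq_matI)
  apply (auto simp: field_simps)
  done

lemma id_hpow: "multrow_mat n 0 a * multrow_mat n 0 b = multrow_mat n 0 (a * b :: 'a::field)"
  by (rule eq_matI) auto

lemma multrow_one: "multrow_mat n k (1::'a::field) = 1\<^sub>m n"
  by (rule eq_matI) auto

lemma addrow_zero: "addrow_mat n (0::'a::field) k l = 1\<^sub>m n"
  by (rule eq_matI) auto

lemma h_eq: "h_mat n 0 \<xi> = multrow_mat n 0 (\<xi>::'a::field)"
  by (rule eq_matI) (auto simp: h_mat_def)

lemma x_eq: "x_mat n 0 1 1 = addrow_mat n (1::'a::field) 0 1"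
  by (rule eq_matI) (auto simp: x_mat_def E_mat_def)


lemma id_C1: "n \<ge> 2 \<Longrightarrow> w_mat n * (addrow_mat n (\<gamma>::'a::field) (n-1) 0 * wT n) = addrow_mat n (-\<gamma>) 0 1"
  apply (rule eq_matI)
  apply (simp_all add: w_index)
  apply (simp add: wsg_def wp_def ws_def)
  apply (auto simp: field_simps)
  done

lemma id_C2: "n \<ge> 2 \<Longrightarrow> addrow_mat n 1 0 1 * (addrow_mat n c 0 1 * addrow_mat n (-1) 0 1) = addrow_mat n (c::'a::field) 0 1"
  apply (rule eq_matI)
  apply (auto simp: field_simps)
  done

lemma id_XX: "n \<ge> 2 \<Longrightarrow> addrow_mat n (-1) 0 1 * addrow_mat n 1 0 1 = (1\<^sub>m n :: 'a::field mat)"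
  apply (rule eq_matI)
  apply (auto simp: field_simps)
  done


lemma assoc3: "(a::'a::field mat) \<in> carrier_mat n n \<Longrightarrow> b \<in> carrier_mat n n \<Longrightarrow> c \<in> carrier_mat n nc \<Longrightarrow> (a * b) * c = a * (b * c)"
  by (rule assoc_mult_mat)

lemma four: assumes "(a::'a::field mat) \<in> carrier_mat n n" "b \<in> carrier_mat n n" "c \<in> carrier_mat n n" "d \<in> carrier_mat n n"
  and "b * c = 1\<^sub>m n" shows "(a * b) * (c * d) = a * d"
proof -
  have "(a * b) * (c * d) = a * (b * (c * d))" using assms by (intro assoc_mult_mat) auto
  also have "b * (c * d) = (b * c) * d" using assms by (intro assoc_mult_mat[symmetric]) auto
  also have "\<dots> = d" using assms by simp
  finally show ?thesis .
qed

lemma gg_carrier: assumes S: "S \<subseteq> carrier_mat n n" and A: "A \<in> gen_group n S"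
  shows "A \<in> carrier_mat n n"
  using A by induct (use S in auto)

lemma gg_mult: assumes S: "S \<subseteq> carrier_mat n n" and A: "A \<in> gen_group n S" and C: "C \<in> gen_group n (S :: 'a::field mat set)"
  shows "A * C \<in> gen_group n S"
  using A
proof induct
  case gen_one
  have "1\<^sub>m n * C = C" using gg_carrier[OF S C] by simp
  then show ?case using C by simp
next
  case (gen_mult s B)
  have "(s * B) * C = s * (B * C)" using gen_mult gg_carrier[OF S C] gg_carrier[OF S] S
    by (intro assoc_mult_mat) auto
  then show ?case using gen_mult by (simp add: gen_group.gen_mult)
next
  case (gen_inv_mult s s' B)
  have "(s' * B) * C = s' * (B * C)" using gen_inv_mult gg_carrier[OF S C] gg_carrier[OF S] S
    by (intro assoc_mult_mat) auto
  then show ?case using gen_inv_mult by (simp add: gen_group.gen_inv_mult)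
qed

lemma gg_gen: assumes S: "S \<subseteq> carrier_mat n n" and s: "s \<in> S"
  shows "s \<in> gen_group n (S :: 'a::field mat set)"
proof -
  have "s * 1\<^sub>m n \<in> gen_group n S" by (rule gen_group.gen_mult[OF s gen_group.gen_one])
  moreover have "s * 1\<^sub>m n = s" using S s by auto
  ultimately show ?thesis by simp
qed

lemma gg_geninv: assumes S: "S \<subseteq> carrier_mat n n" and s: "s \<in> S" and s': "s' \<in> carrier_mat n n"
  and e1: "s * s' = 1\<^sub>m n" and e2: "s' * s = 1\<^sub>m n"
  shows "s' \<in> gen_group n (S :: 'a::field mat set)"
proof -
  have i1: "inverts_mat s s'" using e1 S s unfolding inverts_mat_def by auto
  have i2: "inverts_mat s' s" using e2 s' unfolding inverts_mat_def by auto
  have "s' * 1\<^sub>m n \<in> gen_group n S" by (rule gen_group.gen_inv_mult[OF s s' i1 i2 gen_group.gen_one])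
  moreover have "s' * 1\<^sub>m n = s'" using s' by auto
  ultimately show ?thesis by simp
qed

lemma gg_inv: assumes S: "S \<subseteq> carrier_mat n n"
  and inv: "\<And>s. s \<in> S \<Longrightarrow> \<exists>s'\<in>carrier_mat n n. s * s' = 1\<^sub>m n \<and> s' * s = 1\<^sub>m n"
  and A: "A \<in> gen_group n (S :: 'a::field mat set)"
  shows "\<exists>A'\<in>gen_group n S. A * A' = 1\<^sub>m n \<and> A' * A = 1\<^sub>m n"
  using A
proof induct
  case gen_one
  show ?case by (rule bexI[of _ "1\<^sub>m n"]) (auto intro: gen_group.gen_one)
next
  case (gen_mult s B)
  from inv[OF gen_mult(1)] obtain s' where s': "s' \<in> carrier_mat n n" "s * s' = 1\<^sub>m n" "s' * s = 1\<^sub>m n" by auto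
  from gen_mult(3) obtain B' where B': "B' \<in> gen_group n S" "B * B' = 1\<^sub>m n" "B' * B = 1\<^sub>m n" by auto
  have s'G: "s' \<in> gen_group n S" using gg_geninv[OF S gen_mult(1) s'] .
  have sc: "s \<in> carrier_mat n n" using S gen_mult(1) by auto
  have Bc: "B \<in> carrier_mat n n" using gg_carrier[OF S gen_mult(2)] .
  have B'c: "B' \<in> carrier_mat n n" using gg_carrier[OF S B'(1)] .
  have "(s * B) * (B' * s') = s * s'" by (rule four[OF sc Bc B'c s'(1) B'(2)])
  hence e1: "(s * B) * (B' * s') = 1\<^sub>m n" using s'(2) by simp
  have "(B' * s') * (s * B) = B' * B" by (rule four[OF B'c s'(1) sc Bc s'(3)])
  hence e2: "(B' * s') * (s * B) = 1\<^sub>m n" using B'(3) by simp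
  show ?case using e1 e2 gg_mult[OF S B'(1) s'G] by blast
next
  case (gen_inv_mult s s' B)
  from gen_inv_mult(6) obtain B' where B': "B' \<in> gen_group n S" "B * B' = 1\<^sub>m n" "B' * B = 1\<^sub>m n" by auto
  have sc: "s \<in> carrier_mat n n" using S gen_inv_mult(1) by auto
  have s'c: "s' \<in> carrier_mat n n" by fact
  have e1: "s * s' = 1\<^sub>m n" using gen_inv_mult(3) sc unfolding inverts_mat_def by auto
  have e2: "s' * s = 1\<^sub>m n" using gen_inv_mult(4) s'c unfolding inverts_mat_def by auto
  have sG: "s \<in> gen_group n S" using gg_gen[OF S gen_inv_mult(1)] .
  have Bc: "B \<in> carrier_mat n n" using gg_carrier[OF S gen_inv_mult(5)] .
  have B'c: "B' \<in> carrier_mat n n" using gg_carrier[OF S B'(1)] .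
  have "(s' * B) * (B' * s) = s' * s" by (rule four[OF s'c Bc B'c sc B'(2)])
  hence f1: "(s' * B) * (B' * s) = 1\<^sub>m n" using e2 by simp
  have "(B' * s) * (s' * B) = B' * B" by (rule four[OF B'c sc s'c Bc e1])
  hence f2: "(B' * s) * (s' * B) = 1\<^sub>m n" using B'(3) by simp
  show ?case using f1 f2 gg_mult[OF S B'(1) sG] by blast
qed

lemma pivot_exists:
  assumes B: "(B::'a::field mat) \<in> carrier_mat n n" and L: "L \<in> carrier_mat n n" "L * B = 1\<^sub>m n"
  and j: "j < n" and unit: "\<forall>i<n. \<forall>c<j. B $$ (i,c) = (if i = c then 1 else 0)"
  shows "\<exists>i. j \<le> i \<and> i < n \<and> B $$ (i,j) \<noteq> 0"
proof (rule ccontr)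
  assume "\<not> ?thesis"
  hence z: "\<And>i. j \<le> i \<Longrightarrow> i < n \<Longrightarrow> B $$ (i,j) = 0" by auto
  define v where "v = vec n (\<lambda>k. if k < j then B $$ (k,j) else if k = j then -1 else (0::'a))"
  have v: "v \<in> carrier_vec n" by (simp add: v_def)
  have Bv: "B *\<^sub>v v = 0\<^sub>v n"
  proof (rule eq_vecI)
    fix i assume "i < dim_vec (0\<^sub>v n)"
    hence i: "i < n" by simp
    have "(B *\<^sub>v v) $ i = (\<Sum>k\<in>{0..<n}. B $$ (i,k) * v $ k)"
      using B i v by (simp add: scalar_prod_def)
    also have "\<dots> = 0"
    proof (cases "i < j")
      case True
      have "(\<Sum>k\<in>{0..<n}. B $$ (i,k) * v $ k) = (\<Sum>k\<in>{0..<n}. (if k = i then B $$ (i,j) else 0) + (if k = j then - B $$ (i,j) else 0))"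
      proof (rule sum.cong)
        fix k assume "k \<in> {0..<n}" hence k: "k < n" by simp
        show "B $$ (i,k) * v $ k = (if k = i then B $$ (i,j) else 0) + (if k = j then - B $$ (i,j) else 0)"
          using k True i unit by (cases "k < j") (auto simp: v_def)
      qed simp
      also have "\<dots> = 0" using i j by (simp add: sum.distrib)
      finally show ?thesis .
    next
      case False
      show ?thesis
      proof (rule sum.neutral, intro ballI)
        fix k assume "k \<in> {0..<n}" hence k: "k < n" by simp
        show "B $$ (i,k) * v $ k = 0"
          using k False i unit z[of i] by (cases "k < j") (auto simp: v_def)
      qed
    qed
    finally show "(B *\<^sub>v v) $ i = 0\<^sub>v n $ i" using i by simp
  qed (use B in simp)
  have "v = (L * B) *\<^sub>v v" using L v by (simp only: L(2) one_mult_mat_vec)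
  also have "\<dots> = L *\<^sub>v (B *\<^sub>v v)" by (rule assoc_mult_mat_vec[OF L(1) B v])
  also have "\<dots> = L *\<^sub>v 0\<^sub>v n" using Bv by simp
  finally have "v $ j = (L *\<^sub>v 0\<^sub>v n) $ j" by simp
  also have "\<dots> = 0" using L j by simp
  finally show False using j by (simp add: v_def)
qed

locale elim_ctx =
  fixes n :: nat and G :: "'a::field mat set"
  assumes car: "G \<subseteq> carrier_mat n n" and one: "1\<^sub>m n \<in> G"
  and cl: "\<And>P Q. P \<in> G \<Longrightarrow> Q \<in> G \<Longrightarrow> P * Q \<in> G"
  and add: "\<And>a k l. k < n \<Longrightarrow> l < n \<Longrightarrow> k \<noteq> l \<Longrightarrow> addrow_mat n a k l \<in> G"
  and mul: "\<And>a k. k < n \<Longrightarrow> a \<noteq> 0 \<Longrightarrow> multrow_mat n k a \<in> G"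
  and linv: "\<And>P. P \<in> G \<Longrightarrow> \<exists>P'\<in>carrier_mat n n. P' * P = 1\<^sub>m n"
begin

definition QQ :: "nat \<Rightarrow> 'a mat \<Rightarrow> bool" where
  "QQ j B \<longleftrightarrow> B \<in> carrier_mat n n \<and> (\<exists>L\<in>carrier_mat n n. L * B = 1\<^sub>m n)
     \<and> (\<forall>i<n. \<forall>c<j. B $$ (i,c) = (if i = c then 1 else 0))"

lemma QQ_mult: assumes Q: "QQ j B" and P: "P \<in> G"
  and e: "\<forall>i<n. \<forall>c<j. (P * B) $$ (i,c) = (if i = c then 1 else 0)"
  shows "QQ j (P * B)"
proof -
  from Q obtain L where B: "B \<in> carrier_mat n n" and L: "L \<in> carrier_mat n n" "L * B = 1\<^sub>m n"
    unfolding QQ_def by auto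
  from linv[OF P] obtain P' where P': "P' \<in> carrier_mat n n" "P' * P = 1\<^sub>m n" by auto
  have Pc: "P \<in> carrier_mat n n" using P car by auto
  have "(L * P') * (P * B) = L * B" by (rule four[OF L(1) P'(1) Pc B P'(2)])
  with L have "(L * P') * (P * B) = 1\<^sub>m n" by simp
  moreover have "L * P' \<in> carrier_mat n n" using L P' by auto
  ultimately show ?thesis unfolding QQ_def using e Pc B by auto
qed

lemma clear: assumes Q: "QQ j C" and j: "j < n" and Cjj: "C $$ (j,j) = 1"
  shows "m \<le> n \<Longrightarrow> \<exists>P\<in>G. QQ j (P * C) \<and> (\<forall>c<n. (P * C) $$ (j,c) = C $$ (j,c))
     \<and> (\<forall>r<m. r \<noteq> j \<longrightarrow> (P * C) $$ (r,j) = 0)"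
proof (induction m)
  case 0
  have Cc: "C \<in> carrier_mat n n" using Q unfolding QQ_def by auto
  hence "1\<^sub>m n * C = C" by simp
  then show ?case using one Q by (intro bexI[of _ "1\<^sub>m n"]) auto
next
  case (Suc m)
  hence m: "m < n" by simp
  from Suc obtain P where P: "P \<in> G" "QQ j (P * C)" "\<forall>c<n. (P * C) $$ (j,c) = C $$ (j,c)"
    "\<forall>r<m. r \<noteq> j \<longrightarrow> (P * C) $$ (r,j) = 0" by auto
  define D where "D = P * C"
  have Cc: "C \<in> carrier_mat n n" using Q unfolding QQ_def by auto
  have Pc: "P \<in> carrier_mat n n" using P car by auto
  have Dc: "D \<in> carrier_mat n n" using Pc Cc D_def by auto
  have DQ: "QQ j D" using P D_def by simp
  have Djj: "D $$ (j,j) = 1" using P(3) j Cjj D_def by auto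
  show ?case
  proof (cases "m = j")
    case True
    show ?thesis using P True by (intro bexI[of _ P]) auto
  next
    case False
    define P2 where "P2 = addrow_mat n (- D $$ (m,j)) m j"
    have P2G: "P2 \<in> G" unfolding P2_def using add m j False by auto
    have P2c: "P2 \<in> carrier_mat n n" using P2G car by auto
    have eq: "(P2 * P) * C = addrow (- D $$ (m,j)) m j D"
    proof -
      have "(P2 * P) * C = P2 * D" unfolding D_def by (rule assoc3[OF P2c Pc Cc])
      also have "\<dots> = addrow (- D $$ (m,j)) m j D" unfolding P2_def
        by (rule addrow_mat[symmetric, OF Dc j])
      finally show ?thesis .
    qed
    have unitD: "\<forall>i<n. \<forall>c<j. D $$ (i,c) = (if i = c then 1 else 0)" using DQ unfolding QQ_def by auto
    have entries: "\<And>r c. r < n \<Longrightarrow> c < n \<Longrightarrow> ((P2 * P) * C) $$ (r,c) = (if m = r then - D $$ (m,j) * D $$ (j,c) + D $$ (r,c) else D $$ (r,c))"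
      unfolding eq using Dc by auto
    have Q2: "QQ j ((P2 * P) * C)"
    proof (rule QQ_mult[OF Q cl[OF P2G P(1)]], intro allI impI)
      fix i c assume i: "i < n" and c: "c < j"
      have "D $$ (j,c) = 0" using unitD j c by auto
      then show "(P2 * P * C) $$ (i, c) = (if i = c then 1 else 0)"
        using entries[OF i] c j unitD i by auto
    qed
    show ?thesis
    proof (rule bexI[OF _ cl[OF P2G P(1)]], intro conjI allI impI)
      show "QQ j (P2 * P * C)" by fact
    next
      fix c assume c: "c < n"
      show "(P2 * P * C) $$ (j, c) = C $$ (j, c)" using entries[OF j c] False P(3) c D_def by auto
    next
      fix r assume r: "r < Suc m" "r \<noteq> j"
      show "(P2 * P * C) $$ (r, j) = 0"
      proof (cases "r = m")
        case True
        then show ?thesis using entries[OF m j] Djj by simp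
      next
        case False
        then show ?thesis using entries[of r j] r m j P(4) D_def by auto
      qed
    qed
  qed
qed

lemma step: assumes Q: "QQ j B" and j: "j < n"
  shows "\<exists>P\<in>G. QQ (Suc j) (P * B)"
proof -
  from Q obtain L where Bc: "B \<in> carrier_mat n n" and L: "L \<in> carrier_mat n n" "L * B = 1\<^sub>m n"
    and unitB: "\<forall>i<n. \<forall>c<j. B $$ (i,c) = (if i = c then 1 else 0)"
    unfolding QQ_def by auto
  obtain i where i: "j \<le> i" "i < n" "B $$ (i,j) \<noteq> 0" using pivot_exists[OF Bc L j unitB] by auto
  have "\<exists>P1\<in>G. QQ j (P1 * B) \<and> (P1 * B) $$ (j,j) \<noteq> 0"
  proof (cases "B $$ (j,j) = 0")
    case False
    have "1\<^sub>m n * B = B" using Bc by simp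
    then show ?thesis using False Q one by (intro bexI[of _ "1\<^sub>m n"]) auto
  next
    case True
    with i have ij: "i \<noteq> j" by auto
    define P1 where "P1 = addrow_mat n (1::'a) j i"
    have P1G: "P1 \<in> G" unfolding P1_def using add i j ij by auto
    have eq: "P1 * B = addrow 1 j i B" unfolding P1_def by (rule addrow_mat[symmetric, OF Bc i(2)])
    have Q1: "QQ j (P1 * B)"
    proof (rule QQ_mult[OF Q P1G], intro allI impI)
      fix r c assume r: "r < n" and c: "c < j"
      show "(P1 * B) $$ (r, c) = (if r = c then 1 else 0)"
        unfolding eq using Bc r c j i unitB by auto
    qed
    have "(P1 * B) $$ (j,j) = B $$ (i,j)" unfolding eq using Bc j True by auto
    then show ?thesis using Q1 P1G i by auto
  qed
  then obtain P1 where P1: "P1 \<in> G" "QQ j (P1 * B)" "(P1 * B) $$ (j,j) \<noteq> 0" by auto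
  define B1 where "B1 = P1 * B"
  define x where "x = B1 $$ (j,j)"
  have x: "x \<noteq> 0" using P1 unfolding x_def B1_def by auto
  have B1c: "B1 \<in> carrier_mat n n" using P1 unfolding B1_def QQ_def by auto
  have unitB1: "\<forall>i<n. \<forall>c<j. B1 $$ (i,c) = (if i = c then 1 else 0)" using P1 unfolding B1_def QQ_def by auto
  define P2 where "P2 = multrow_mat n j (inverse x)"
  have P2G: "P2 \<in> G" unfolding P2_def using mul j x by auto
  have eq2: "P2 * B1 = multrow j (inverse x) B1" unfolding P2_def by (rule multrow_mat[symmetric, OF B1c])
  have Q2: "QQ j (P2 * B1)"
  proof (rule QQ_mult[OF _ P2G], unfold B1_def, rule P1(2), fold B1_def, intro allI impI)
    fix r c assume r: "r < n" and c: "c < j"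
    show "(P2 * B1) $$ (r, c) = (if r = c then 1 else 0)"
      unfolding eq2 using B1c r c j unitB1 by auto
  qed
  have B2jj: "(P2 * B1) $$ (j,j) = 1" unfolding eq2 using B1c j x x_def by auto
  from clear[OF Q2 j B2jj, of n] obtain P3 where P3: "P3 \<in> G" "QQ j (P3 * (P2 * B1))"
    "\<forall>c<n. (P3 * (P2 * B1)) $$ (j,c) = (P2 * B1) $$ (j,c)"
    "\<forall>r<n. r \<noteq> j \<longrightarrow> (P3 * (P2 * B1)) $$ (r,j) = 0" by auto
  have QS: "QQ (Suc j) (P3 * (P2 * B1))"
    unfolding QQ_def
  proof (intro conjI allI impI)
    show "P3 * (P2 * B1) \<in> carrier_mat n n" using P3 unfolding QQ_def by auto
    show "\<exists>L\<in>carrier_mat n n. L * (P3 * (P2 * B1)) = 1\<^sub>m n" using P3 unfolding QQ_def by auto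
  next
    fix r c assume r: "r < n" and c: "c < Suc j"
    show "(P3 * (P2 * B1)) $$ (r, c) = (if r = c then 1 else 0)"
    proof (cases "c < j")
      case True then show ?thesis using P3(2) r unfolding QQ_def by auto
    next
      case False
      hence "c = j" using c by auto
      then show ?thesis using P3(3,4) r B2jj j by auto
    qed
  qed
  have P1c: "P1 \<in> carrier_mat n n" using P1 car by auto
  have P2c: "P2 \<in> carrier_mat n n" using P2G car by auto
  have P3c: "P3 \<in> carrier_mat n n" using P3 car by auto
  have "(P3 * (P2 * P1)) * B = P3 * (P2 * B1)"
    unfolding B1_def using P1c P2c P3c Bc by (simp add: assoc3)
  with QS show ?thesis using cl[OF P3(1) cl[OF P2G P1(1)]] by metis
qed

lemma reduce: assumes A: "A \<in> carrier_mat n n" and L: "L \<in> carrier_mat n n" "L * A = 1\<^sub>m n"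
  shows "\<exists>P\<in>G. P * A = 1\<^sub>m n"
proof -
  have "j \<le> n \<Longrightarrow> \<exists>P\<in>G. QQ j (P * A)" for j
  proof (induction j)
    case 0
    have "1\<^sub>m n * A = A" using A by simp
    then show ?case using one A L unfolding QQ_def by (intro bexI[of _ "1\<^sub>m n"]) auto
  next
    case (Suc j)
    then obtain P where P: "P \<in> G" "QQ j (P * A)" by auto
    from step[OF P(2)] Suc obtain P' where P': "P' \<in> G" "QQ (Suc j) (P' * (P * A))" by auto
    have "(P' * P) * A = P' * (P * A)" using P P' car A by (intro assoc3) auto
    then show ?case using P' cl[OF P'(1) P(1)] by metis
  qed
  from this[of n] obtain P where P: "P \<in> G" "QQ n (P * A)" by auto
  have "P * A = 1\<^sub>m n"
  proof (rule eq_matI)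
    fix i j assume "i < dim_row (1\<^sub>m n)" "j < dim_col (1\<^sub>m n)"
    then show "(P * A) $$ (i,j) = 1\<^sub>m n $$ (i,j)" using P(2) unfolding QQ_def by auto
  qed (use P(2) in \<open>auto simp: QQ_def\<close>)
  with P show ?thesis by auto
qed

end

lemma dim_assoc: "dim_row M = n \<Longrightarrow> (a::'a::field mat) \<in> carrier_mat n n \<Longrightarrow> b \<in> carrier_mat n n \<Longrightarrow> (a * b) * M = a * (b * M)"
  by (rule assoc_mult_mat[of a n n b n M "dim_col M"]) (auto intro: carrier_matI)

theorem mainTheorem1:
  fixes n :: nat and \<xi> :: "'a::{field,finite}"
  assumes "n \<ge> 2"
    and "card (UNIV :: 'a set) \<noteq> 2"
    and "{\<xi> ^ k | k. k \<in> (UNIV :: nat set)} = UNIV - {0}"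
  shows "gen_group n {h_mat n 0 \<xi>, x_mat n 0 1 (1::'a) * w_mat n} = (GL n :: 'a mat set)"
proof -
  have n2: "2 \<le> n" using assms(1) .
  have n1: "1 < n" "0 < n" "n - 1 < n" "n - 1 \<noteq> 0" "Suc 0 < n" using n2 by auto
  have "\<xi> \<in> {\<xi> ^ k | k. k \<in> (UNIV :: nat set)}" by (rule CollectI, rule exI[of _ 1]) auto
  hence xi0: "\<xi> \<noteq> 0" using assms(3) by auto
  have allpow: "\<exists>k. \<xi> ^ k = \<alpha>" if "\<alpha> \<noteq> 0" for \<alpha>
  proof -
    have "\<alpha> \<in> {\<xi> ^ k | k. k \<in> (UNIV :: nat set)}" using assms(3) that by auto
    then show ?thesis by auto
  qed
  have xi1: "\<xi> \<noteq> 1"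
  proof
    assume "\<xi> = 1"
    then have "\<alpha> = 0 \<or> \<alpha> = 1" for \<alpha> :: 'a using allpow[of \<alpha>] by auto
    then have "(UNIV::'a set) = {0,1}" by auto
    then have "card (UNIV::'a set) = card {0::'a, 1}" by (simp only:)
    also have "\<dots> = 2" by simp
    finally have "card (UNIV::'a set) = 2" .
    with assms(2) show False by simp
  qed
  define H where "H = multrow_mat n 0 \<xi>"
  define Hi where "Hi = multrow_mat n 0 (inverse \<xi>)"
  define X where "X = addrow_mat n (1::'a) 0 1"
  define X' where "X' = addrow_mat n (-1::'a) 0 1"
  define W where "W = (w_mat n :: 'a mat)"
  define WT where "WT = (wT n :: 'a mat)"
  define B where "B = X * W"
  define Bi where "Bi = WT * X'"
  define S where "S = {H, B}"
  have Seq: "{h_mat n 0 \<xi>, x_mat n 0 1 (1::'a) * w_mat n} = S"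
    unfolding S_def H_def B_def X_def W_def h_eq x_eq ..
  define G where "G = gen_group n S"
  have Hc: "H \<in> carrier_mat n n" and Hic: "Hi \<in> carrier_mat n n" and Xc: "X \<in> carrier_mat n n"
    and X'c: "X' \<in> carrier_mat n n" and Wc: "W \<in> carrier_mat n n" and WTc: "WT \<in> carrier_mat n n"
    unfolding H_def Hi_def X_def X'_def W_def WT_def by auto
  have Bc: "B \<in> carrier_mat n n" and Bic: "Bi \<in> carrier_mat n n"
    unfolding B_def Bi_def using Xc X'c Wc WTc by auto
  have dims: "dim_row H = n" "dim_row Hi = n" "dim_row X = n" "dim_row X' = n" "dim_row W = n" "dim_row WT = n"
    "dim_row B = n" "dim_row Bi = n"
    using Hc Hic Xc X'c Wc WTc Bc Bic by auto
  have eB: "dim_row M = n \<Longrightarrow> B * M = X * (W * M)" for M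
    unfolding B_def by (rule dim_assoc[OF _ Xc Wc])
  have eBi: "dim_row M = n \<Longrightarrow> Bi * M = WT * (X' * M)" for M
    unfolding Bi_def by (rule dim_assoc[OF _ WTc X'c])
  have Sc: "S \<subseteq> carrier_mat n n" unfolding S_def using Hc Bc by auto
  have BBi: "B * Bi = 1\<^sub>m n"
    using eB[of Bi] dims unfolding Bi_def X_def W_def WT_def X'_def using id_BBinv[OF n2] by simp
  have BiB: "Bi * B = 1\<^sub>m n"
    using eBi[of B] dims unfolding B_def X_def W_def WT_def X'_def using id_BinvB[OF n2] by simp
  have HHi: "H * Hi = 1\<^sub>m n" "Hi * H = 1\<^sub>m n"
    unfolding H_def Hi_def id_hpow using xi0 by (simp_all add: multrow_one)
  have Sinv: "\<And>s. s \<in> S \<Longrightarrow> \<exists>s'\<in>carrier_mat n n. s * s' = 1\<^sub>m n \<and> s' * s = 1\<^sub>m n"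
    unfolding S_def using HHi BBi BiB Hic Bic by auto
  have Gc: "A \<in> G \<Longrightarrow> A \<in> carrier_mat n n" for A unfolding G_def by (rule gg_carrier[OF Sc])
  have Gm: "A \<in> G \<Longrightarrow> C \<in> G \<Longrightarrow> A * C \<in> G" for A C unfolding G_def by (rule gg_mult[OF Sc])
  have Ginv: "A \<in> G \<Longrightarrow> \<exists>A'\<in>G. A * A' = 1\<^sub>m n \<and> A' * A = 1\<^sub>m n" for A
    unfolding G_def by (rule gg_inv[OF Sc Sinv])
  have G1: "1\<^sub>m n \<in> G" unfolding G_def by (rule gen_group.gen_one)
  have HG: "H \<in> G" unfolding G_def using gg_gen[OF Sc] S_def by auto
  have BG: "B \<in> G" unfolding G_def using gg_gen[OF Sc] S_def by auto
  have Mpow: "multrow_mat n 0 (\<xi> ^ k) \<in> G" for k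
  proof (induction k)
    case 0 then show ?case using G1 by (simp add: multrow_one)
  next
    case (Suc k)
    have "multrow_mat n 0 (\<xi> ^ Suc k) = H * multrow_mat n 0 (\<xi> ^ k)" unfolding H_def id_hpow by simp
    then show ?case using Gm[OF HG Suc] by simp
  qed
  have M0: "\<alpha> \<noteq> 0 \<Longrightarrow> multrow_mat n 0 \<alpha> \<in> G" for \<alpha> using allpow[of \<alpha>] Mpow by auto
  have HiG: "Hi \<in> G" unfolding Hi_def using M0 xi0 by auto
  have BiG: "Bi \<in> G"
  proof -
    obtain B' where B': "B' \<in> G" "B * B' = 1\<^sub>m n" "B' * B = 1\<^sub>m n" using Ginv[OF BG] by auto
    have B'c: "B' \<in> carrier_mat n n" using Gc[OF B'(1)] .
    have "Bi = Bi * (B * B')" using B'(2) Bic by simp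
    also have "\<dots> = (Bi * B) * B'" using Bic Bc B'c by (simp add: assoc_mult_mat)
    also have "\<dots> = B'" using BiB B'c by simp
    finally show ?thesis using B'(1) by simp
  qed
  define c where "c = (\<xi> - 1)^2 / \<xi>"
  have c0: "c \<noteq> 0" unfolding c_def using xi0 xi1 by auto
  have TG: "addrow_mat n c (n-1) 0 \<in> G"
  proof -
    have m: "H * (Bi * (H * (B * (Hi * (Bi * (Hi * B)))))) \<in> G"
      by (intro Gm HG BiG BG HiG)
    have "H * (Bi * (H * (B * (Hi * (Bi * (Hi * B)))))) =
      H * (WT * (X' * (H * (X * (W * (Hi * (WT * (X' * (Hi * B)))))))))"
      by (simp add: eB eBi dims)
    also have "\<dots> = addrow_mat n c (n-1) 0"
      unfolding B_def H_def WT_def X'_def X_def W_def Hi_def c_def by (rule id_T[OF n2 xi0])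
    finally show ?thesis using m by simp
  qed
  have xn0: "addrow_mat n \<gamma> (n-1) 0 \<in> G" for \<gamma>
  proof (cases "\<gamma> = 0")
    case True then show ?thesis using G1 by (simp add: addrow_zero)
  next
    case False
    define \<beta> where "\<beta> = c / \<gamma>"
    have b0: "\<beta> \<noteq> 0" unfolding \<beta>_def using c0 False by auto
    have "multrow_mat n 0 \<beta> * (addrow_mat n c (n-1) 0 * multrow_mat n 0 (inverse \<beta>)) \<in> G"
      using b0 by (intro Gm M0 TG) auto
    moreover have "c / \<beta> = \<gamma>" unfolding \<beta>_def using c0 False by auto
    ultimately show ?thesis using id_hconj[OF n2 b0, of c] by simp
  qed
  have x01: "addrow_mat n \<gamma> 0 1 \<in> G" for \<gamma>
  proof -
    define x where "x = addrow_mat n (-\<gamma>) (n-1) 0"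
    have xc: "x \<in> carrier_mat n n" unfolding x_def by auto
    have m: "B * (x * Bi) \<in> G" unfolding x_def using xn0 BG BiG by (intro Gm) auto
    have "B * (x * Bi) = X * (W * (x * (WT * X')))" using eB[of "x * Bi"] xc unfolding Bi_def by simp
    also have "W * (x * (WT * X')) = (W * (x * WT)) * X'"
    proof -
      have "(W * (x * WT)) * X' = W * ((x * WT) * X')"
        by (rule assoc_mult_mat[of W n n "x * WT" n X' n]) (use Wc xc WTc X'c in auto)
      also have "(x * WT) * X' = x * (WT * X')" by (rule assoc_mult_mat[OF xc WTc X'c])
      finally show ?thesis by simp
    qed
    also have "W * (x * WT) = addrow_mat n \<gamma> 0 1"
      unfolding W_def x_def WT_def using id_C1[OF n2, of "-\<gamma>"] by simp
    also have "X * (addrow_mat n \<gamma> 0 1 * X') = addrow_mat n \<gamma> 0 1"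
      unfolding X_def X'_def by (rule id_C2[OF n2])
    finally show ?thesis using m by simp
  qed
  have WG: "W \<in> G"
  proof -
    have "X' * B \<in> G" using x01[of "-1"] BG unfolding X'_def by (intro Gm) auto
    moreover have "X' * B = W"
    proof -
      have "X' * B = (X' * X) * W" unfolding B_def using X'c Xc Wc by (simp add: assoc_mult_mat)
      also have "X' * X = 1\<^sub>m n" unfolding X'_def X_def by (rule id_XX[OF n2])
      finally show ?thesis using Wc by simp
    qed
    ultimately show ?thesis by simp
  qed
  have WTG: "WT \<in> G"
  proof -
    obtain W' where W': "W' \<in> G" "W * W' = 1\<^sub>m n" "W' * W = 1\<^sub>m n" using Ginv[OF WG] by auto
    have W'c: "W' \<in> carrier_mat n n" using Gc[OF W'(1)] .
    have "WT = WT * (W * W')" using W'(2) WTc by simp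
    also have "\<dots> = (WT * W) * W'" using WTc Wc W'c by (simp add: assoc_mult_mat)
    also have "WT * W = 1\<^sub>m n" unfolding WT_def W_def by (rule id_wTw[OF n2])
    finally show ?thesis using W'(1) W'c by simp
  qed
  have conj: "M \<in> G \<Longrightarrow> W * (M * WT) \<in> G" for M using WG WTG by (intro Gm)
  have super: "Suc i < n \<Longrightarrow> addrow_mat n \<gamma> i (Suc i) \<in> G" for i \<gamma>
  proof (induction i arbitrary: \<gamma>)
    case 0 then show ?case using x01 by simp
  next
    case (Suc i)
    have m: "W * (addrow_mat n \<gamma> i (Suc i) * WT) \<in> G" using Suc by (intro conj) auto
    have e: "W * (addrow_mat n \<gamma> i (Suc i) * WT) = addrow_mat n \<gamma> (Suc i) (Suc (Suc i))"
      unfolding W_def WT_def by (rule id_conj_add[OF Suc(2)])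
    show ?case using m unfolding e .
  qed
  have commG: "addrow_mat n a i j \<in> G"
    if "i < n" "k < n" "j < n" "i \<noteq> k" "k \<noteq> j" "i \<noteq> j"
      "\<And>a. addrow_mat n a i k \<in> G" "\<And>b. addrow_mat n b k j \<in> G" for a i k j
  proof -
    have "addrow_mat n a i k * (addrow_mat n 1 k j * (addrow_mat n (-a) i k * addrow_mat n (-1) k j)) \<in> G"
      using that by (intro Gm) auto
    then show ?thesis using id_comm[OF that(1-6), of a 1] by simp
  qed
  have upper: "i + Suc d < n \<Longrightarrow> addrow_mat n \<gamma> i (i + Suc d) \<in> G" for d i \<gamma>
  proof (induction d arbitrary: \<gamma>)
    case 0 then show ?case using super by simp
  next
    case (Suc d)
    show ?case
      by (rule commG[of i "i + Suc d"]) (use Suc super in auto)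
  qed
  have upper': "i < l \<Longrightarrow> l < n \<Longrightarrow> addrow_mat n \<gamma> i l \<in> G" for i l \<gamma>
    using upper[of i "l - i - 1" \<gamma>] by simp
  have lower0: "0 < k \<Longrightarrow> k < n \<Longrightarrow> addrow_mat n \<gamma> k 0 \<in> G" for k \<gamma>
  proof (cases "k = n - 1")
    case True then show ?thesis using xn0 by simp
  next
    case False
    assume k: "0 < k" "k < n"
    show ?thesis
      by (rule commG[of k "n - 1"]) (use k False upper' xn0 in auto)
  qed
  have allx: "k < n \<Longrightarrow> l < n \<Longrightarrow> k \<noteq> l \<Longrightarrow> addrow_mat n \<gamma> k l \<in> G" for k l \<gamma>
  proof -
    assume kl: "k < n" "l < n" "k \<noteq> l"
    show ?thesis
    proof (cases "k < l")
      case True then show ?thesis using upper' kl by auto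
    next
      case False
      show ?thesis
      proof (cases "l = 0")
        case True then show ?thesis using lower0 kl by auto
      next
        case l0: False
        show ?thesis
          by (rule commG[of k 0]) (use kl False l0 lower0 upper' in auto)
      qed
    qed
  qed
  have allh: "k < n \<Longrightarrow> \<alpha> \<noteq> 0 \<Longrightarrow> multrow_mat n k \<alpha> \<in> G" for k \<alpha>
  proof (induction k)
    case 0 then show ?case using M0 by simp
  next
    case (Suc k)
    have m: "W * (multrow_mat n k \<alpha> * WT) \<in> G" using Suc by (intro conj) auto
    have e: "W * (multrow_mat n k \<alpha> * WT) = multrow_mat n (Suc k) \<alpha>"
      unfolding W_def WT_def by (rule id_conj_mul[OF Suc(2)])
    show ?case using m unfolding e .
  qed
  interpret E: elim_ctx n G
  proof
    show "G \<subseteq> carrier_mat n n" using Gc by auto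
    show "1\<^sub>m n \<in> G" by (rule G1)
  next
    fix P Q assume "P \<in> G" "Q \<in> G" then show "P * Q \<in> G" by (rule Gm)
  next
    fix a :: 'a and k l assume "k < n" "l < n" "k \<noteq> l" then show "addrow_mat n a k l \<in> G" by (rule allx)
  next
    fix a :: 'a and k assume "k < n" "a \<noteq> 0" then show "multrow_mat n k a \<in> G" by (rule allh)
  next
    fix P assume "P \<in> G"
    then show "\<exists>P'\<in>carrier_mat n n. P' * P = 1\<^sub>m n" using Ginv Gc by blast
  qed
  have "G = GL n"
  proof
    show "G \<subseteq> GL n"
    proof
      fix A assume A: "A \<in> G"
      have Ac: "A \<in> carrier_mat n n" by (rule Gc[OF A])
      obtain A' where A': "A' \<in> G" "A * A' = 1\<^sub>m n" "A' * A = 1\<^sub>m n" using Ginv[OF A] by auto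
      have A'c: "A' \<in> carrier_mat n n" by (rule Gc[OF A'(1)])
      have "invertible_mat A"
        unfolding invertible_mat_def inverts_mat_def square_mat.simps
        using Ac A'c A' by (intro conjI exI[of _ A']) auto
      then show "A \<in> GL n" unfolding GL_def using Ac by auto
    qed
  next
    show "GL n \<subseteq> G"
    proof
      fix A :: "'a mat" assume "A \<in> GL n"
      then have Ac: "A \<in> carrier_mat n n" and inv: "invertible_mat A" unfolding GL_def by auto
      from inv obtain L where L: "A * L = 1\<^sub>m (dim_row A)" "L * A = 1\<^sub>m (dim_row L)"
        unfolding invertible_mat_def inverts_mat_def by auto
      have "dim_col L = n" using arg_cong[OF L(1), of dim_col] Ac by simp
      moreover have "dim_row L = n" using arg_cong[OF L(2), of dim_col] Ac by simp
      ultimately have Lc: "L \<in> carrier_mat n n" by auto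
      have LA: "L * A = 1\<^sub>m n" using L(2) Lc by simp
      obtain P where P: "P \<in> G" "P * A = 1\<^sub>m n" using E.reduce[OF Ac Lc LA] by auto
      obtain P' where P': "P' \<in> G" "P * P' = 1\<^sub>m n" "P' * P = 1\<^sub>m n" using Ginv[OF P(1)] by auto
      have Pc: "P \<in> carrier_mat n n" by (rule Gc[OF P(1)])
      have P'c: "P' \<in> carrier_mat n n" by (rule Gc[OF P'(1)])
      have "A = (P' * P) * A" using P'(3) Ac by simp
      also have "\<dots> = P' * (P * A)" using P'c Pc Ac by (simp add: assoc_mult_mat)
      also have "\<dots> = P'" using P(2) P'c by simp
      finally show "A \<in> G" using P'(1) by simp
    qed
  qed
  then show ?thesis unfolding Seq G_def .
qed


end
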